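(* Let $N\ge 3$, $G>0$, $m_1,\dots,m_N>0$, let $I$ be a nondegenerate interval, and let $r_1,\dots,r_N:I\to\mathbb{R}^3$ be $C^2$ functions with $r_j(t)\neq r_k(t)$ for all $t\in I$, $j\neq k$, satisfying for all $1\le j<k\le N$ $$(r_j-r_k)''=G\sum_{\substack{i=1\\ i\neq j}}^{N}\frac{m_i(r_i-r_j)}{\|r_i-r_j\|^3}-G\sum_{\substack{i=1\\ i\neq k}}^{N}\frac{m_i(r_i-r_k)}{\|r_i-r_k\|^3}.$$ Then there are two distinct pairs $(j_1,j_2)\neq(j_3,j_4)$ with $1\le j_1<j_2\le N$ and $1\le j_3<j_4\le N$ such that neither $(r_{j_1}-r_{j_2})''$ nor $(r_{j_3}-r_{j_4})''$ is identically $\vec 0$ on $I$.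
   Context: $\|\cdot\|$ is the Euclidean norm on $\mathbb{R}^3$. *)

theory Defs
  imports "HOL-Analysis.Analysis"
begin

end

theory Submission
  imports Defs
begin

lemma sq_ineq:
  fixes w v :: "real ^ 3"
  assumes "norm (w + v) \<le> norm v" "w \<noteq> 0"
  shows "inner w v < 0"
proof -
  have "norm (w+v)^2 \<le> norm v ^2" using assms(1) by (simp add: power_mono)
  hence "inner (w+v) (w+v) \<le> inner v v" by (simp add: power2_norm_eq_inner)
  hence "inner w w + 2 * inner w v \<le> 0" by (simp add: inner_add inner_commute algebra_simps)
  moreover have "inner w w > 0" using assms(2) by simp
  ultimately show ?thesis by linarith
qed

lemma acc_sign:
  fixes P :: "nat \<Rightarrow> real ^ 3" and v :: "real ^ 3"
  assumes fin: "finite A" and ne: "A \<noteq> {}"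
    and m: "\<And>i. i \<in> A \<Longrightarrow> m i > 0"
    and neg: "\<And>i. i \<in> A \<Longrightarrow> inner (P i - P j) v < 0"
  shows "inner (\<Sum>i\<in>A. (m i / norm (P i - P j) ^ 3) *\<^sub>R (P i - P j)) v < 0"
proof -
  have "inner (\<Sum>i\<in>A. (m i / norm (P i - P j) ^ 3) *\<^sub>R (P i - P j)) v
     = (\<Sum>i\<in>A. (m i / norm (P i - P j) ^ 3) * inner (P i - P j) v)"
    by (simp add: inner_sum_left)
  also have "\<dots> < (\<Sum>i\<in>A. 0)"
  proof (rule sum_strict_mono[OF fin ne])
    fix i assume i: "i \<in> A"
    have "P i - P j \<noteq> 0" using neg[OF i] by auto
    hence "m i / norm (P i - P j) ^ 3 > 0" using m[OF i] by simp
    thus "(m i / norm (P i - P j) ^ 3) * inner (P i - P j) v < 0"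
      using neg[OF i] mult_pos_neg by blast
  qed
  finally show ?thesis by simp
qed

theorem corollary2:
  fixes N :: nat and G :: real and m :: "nat \<Rightarrow> real" and I :: "real set"
    and r r' r'' :: "nat \<Rightarrow> real \<Rightarrow> real ^ 3"
  assumes N: "N \<ge> 3"
    and G: "G > 0"
    and m: "\<And>i. i \<in> {1..N} \<Longrightarrow> m i > 0"
    and I_int: "is_interval I"
    and I_nondeg: "\<exists>a\<in>I. \<exists>b\<in>I. a < b"
    and d1: "\<And>j t. j \<in> {1..N} \<Longrightarrow> t \<in> I \<Longrightarrow>
               (r j has_vector_derivative r' j t) (at t within I)"
    and d2: "\<And>j t. j \<in> {1..N} \<Longrightarrow> t \<in> I \<Longrightarrow>
               (r' j has_vector_derivative r'' j t) (at t within I)"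
    and c2: "\<And>j. j \<in> {1..N} \<Longrightarrow> continuous_on I (r'' j)"
    and distinct: "\<And>j k t. j \<in> {1..N} \<Longrightarrow> k \<in> {1..N} \<Longrightarrow> j \<noteq> k \<Longrightarrow> t \<in> I \<Longrightarrow>
               r j t \<noteq> r k t"
    and eqn: "\<And>j k t. 1 \<le> j \<Longrightarrow> j < k \<Longrightarrow> k \<le> N \<Longrightarrow> t \<in> I \<Longrightarrow>
               r'' j t - r'' k t =
                 G *\<^sub>R (\<Sum>i\<in>{1..N} - {j}. (m i / norm (r i t - r j t) ^ 3) *\<^sub>R (r i t - r j t))
               - G *\<^sub>R (\<Sum>i\<in>{1..N} - {k}. (m i / norm (r i t - r k t) ^ 3) *\<^sub>R (r i t - r k t))"
  shows "\<exists>j1 j2 j3 j4. 1 \<le> j1 \<and> j1 < j2 \<and> j2 \<le> N \<and> 1 \<le> j3 \<and> j3 < j4 \<and> j4 \<le> N \<and>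
           (j1, j2) \<noteq> (j3, j4) \<and>
           (\<exists>t\<in>I. r'' j1 t - r'' j2 t \<noteq> 0) \<and> (\<exists>t\<in>I. r'' j3 t - r'' j4 t \<noteq> 0)"
proof -
  obtain t where t: "t \<in> I" using I_nondeg by blast
  define P where "P i = r i t" for i
  define a where "a j = (\<Sum>i\<in>{1..N} - {j}. (m i / norm (P i - P j) ^ 3) *\<^sub>R (P i - P j))" for j
  have key: "r'' j t - r'' k t \<noteq> 0"
    if jk: "j \<in> {1..N}" "k \<in> {1..N}" "j \<noteq> k" "a j \<noteq> a k" for j k
  proof (cases "j < k")
    case True
    have "r'' j t - r'' k t = G *\<^sub>R (a j - a k)"
      using eqn[of j k t] True jk t by (simp add: a_def P_def scaleR_diff_right)
    thus ?thesis using G jk by simp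
  next
    case False
    hence "k < j" using jk by simp
    have "r'' k t - r'' j t = G *\<^sub>R (a k - a j)"
      using eqn[of k j t] \<open>k < j\<close> jk t by (simp add: a_def P_def scaleR_diff_right)
    thus ?thesis using G jk by (metis eq_iff_diff_eq_0 scaleR_eq_0_iff less_irrefl)
  qed
  define S where "S = {p \<in> {1..N} \<times> {1..N}. fst p \<noteq> snd p}"
  have finS: "finite S" unfolding S_def by simp
  have "(1, 2) \<in> S" using N unfolding S_def by auto
  hence neS: "S \<noteq> {}" by auto
  define f where "f p = norm (P (fst p) - P (snd p))" for p
  define D where "D = Max (f ` S)"
  have "D \<in> f ` S" unfolding D_def using finS neS by simp
  then obtain j k where jkS: "(j, k) \<in> S" and Dj: "D = norm (P j - P k)"
    unfolding f_def by auto
  have Dge: "norm (P i - P i') \<le> D" if "i \<in> {1..N}" "i' \<in> {1..N}" for i i'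
  proof (cases "i = i'")
    case True thus ?thesis using Dj by simp
  next
    case False
    hence "(i, i') \<in> S" using that unfolding S_def by auto
    hence "f (i, i') \<le> D" unfolding D_def using finS by simp
    thus ?thesis unfolding f_def by simp
  qed
  have j: "j \<in> {1..N}" and k: "k \<in> {1..N}" and jk: "j \<noteq> k" using jkS unfolding S_def by auto
  define v where "v = P j - P k"
  have negj: "inner (P i - P j) v < 0" if "i \<in> {1..N} - {j}" for i
  proof (rule sq_ineq)
    show "norm (P i - P j + v) \<le> norm v"
      using Dge[of i k] that k Dj unfolding v_def by simp
    show "P i - P j \<noteq> 0" using distinct[of i j t] that j t unfolding P_def by auto
  qed
  have posk: "inner (P i - P k) (-v) < 0" if "i \<in> {1..N} - {k}" for i
  proof (rule sq_ineq)
    show "norm (P i - P k + - v) \<le> norm (-v)"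
      using Dge[of i j] that j Dj unfolding v_def by (simp add: algebra_simps norm_minus_commute)
    show "P i - P k \<noteq> 0" using distinct[of i k t] that k t unfolding P_def by auto
  qed
  have ne1: "{1..N} - {j} \<noteq> {}" using k jk by auto
  have ne2: "{1..N} - {k} \<noteq> {}" using j jk by auto
  have aj: "inner (a j) v < 0" unfolding a_def
    by (rule acc_sign) (use ne1 m negj in auto)
  have ak: "inner (a k) (-v) < 0" unfolding a_def
    by (rule acc_sign) (use ne2 m posk in auto)
  have ajk: "a j \<noteq> a k" using aj ak by auto
  obtain l where l: "l \<in> {1..N}" "l \<noteq> j" "l \<noteq> k"
  proof -
    have "card ({1..N} - {j, k}) > 0" using N j k jk by (simp add: card_Diff_subset)
    hence "{1..N} - {j,k} \<noteq> {}" by (metis card.empty less_irrefl)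
    then obtain x where "x \<in> {1..N} - {j,k}" by blast
    thus ?thesis by (intro that[of x]) auto
  qed
  obtain q where q: "q \<in> {j, k}" "a l \<noteq> a q" using ajk by (cases "a l = a j") auto
  have q1: "q \<in> {1..N}" using q j k by auto
  have k1: "r'' j t - r'' k t \<noteq> 0" using key[OF j k jk ajk] .
  have k2: "r'' l t - r'' q t \<noteq> 0" using key[OF l(1) q1 _ q(2)] l q by auto
  have k1': "r'' (min j k) t - r'' (max j k) t \<noteq> 0" using k1
    by (cases "j \<le> k") (auto simp: min_def max_def dest: sym)
  have k2': "r'' (min l q) t - r'' (max l q) t \<noteq> 0" using k2
    by (cases "l \<le> q") (auto simp: min_def max_def dest: sym)
  show ?thesis
    apply (rule exI[of _ "min j k"], rule exI[of _ "max j k"], rule exI[of _ "min l q"], rule exI[of _ "max l q"])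
    using j k jk l q q1 k1' k2' t by (auto simp: min_def max_def split: if_splits)
qed

end
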